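(* Let $$A= \begin{pmatrix} 1& -2& 2\\ 2&-1& 2\\ 2&-2& 3 \end{pmatrix},\quad B= \begin{pmatrix} 1& 2& 2\\ 2&1& 2\\ 2&2& 3 \end{pmatrix},\quad C= \begin{pmatrix} -1& 2& 2\\ -2&1& 2\\ -2&2& 3 \end{pmatrix},$$ and let $P=(x,y,z)$ be a primitive Pythagorean triple. Then the points of $\mathbb{R}^3$ with coordinates $AP^\top$, $BP^\top$, $CP^\top$ are the vertices of a triangle of area $2xy\sqrt{17}$.
   Context: A primitive Pythagorean triple is a triple $(x,y,z)$ of positive integers with $x^2+y^2=z^2$, $\gcd(x,y)=1$ and $x$ odd. Triples are regarded as row vectors and $\top$ denotes transpose; $\mathbb{R}^3$ carries the Euclidean metric. *)

theory Defs
  imports "HOL-Analysis.Analysis"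
begin

definition primitive_pythagorean_triple :: "int \<Rightarrow> int \<Rightarrow> int \<Rightarrow> bool" where
  "primitive_pythagorean_triple x y z \<longleftrightarrow>
     x > 0 \<and> y > 0 \<and> z > 0 \<and> x\<^sup>2 + y\<^sup>2 = z\<^sup>2 \<and> gcd x y = 1 \<and> odd x"

definition triangle_area :: "real^3 \<Rightarrow> real^3 \<Rightarrow> real^3 \<Rightarrow> real" where
  "triangle_area a b c = norm (cross3 (b - a) (c - a)) / 2"

definition matA :: "real^3^3" where
  "matA = vector [vector [1, -2, 2], vector [2, -1, 2], vector [2, -2, 3]]"
definition matB :: "real^3^3" where
  "matB = vector [vector [1, 2, 2], vector [2, 1, 2], vector [2, 2, 3]]"
definition matC :: "real^3^3" where
  "matC = vector [vector [-1, 2, 2], vector [-2, 1, 2], vector [-2, 2, 3]]"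

end

theory Submission
  imports Defs
begin

lemma forall3': "(\<forall>i::3. Q i) \<longleftrightarrow> Q 1 \<and> Q 2 \<and> Q 3"
  by (metis exhaust_3)

lemma cross_val:
  fixes x y z :: real
  defines "P \<equiv> (vector [x, y, z] :: real^3)"
  shows "cross3 (matB *v P - matA *v P) (matC *v P - matA *v P) = vector [8*x*y, 8*x*y, -12*x*y]"
  unfolding P_def matA_def matB_def matC_def
  by (simp add: vec_eq_iff forall3' cross3_simps matrix_vector_mult_def sum_3 algebra_simps)

theorem mainTheorem12:
  fixes x y z :: int
  assumes "primitive_pythagorean_triple x y z"
  defines "P \<equiv> (vector [of_int x, of_int y, of_int z] :: real^3)"
  shows "\<not> collinear {matA *v P, matB *v P, matC *v P}
    \<and> triangle_area (matA *v P) (matB *v P) (matC *v P) = 2 * of_int x * of_int y * sqrt 17"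
proof -
  have xp: "real_of_int x > 0" and yp: "real_of_int y > 0"
    using assms(1) unfolding primitive_pythagorean_triple_def by auto
  have cr: "cross3 (matB *v P - matA *v P) (matC *v P - matA *v P)
      = vector [8*real_of_int x*real_of_int y, 8*real_of_int x*real_of_int y, -12*real_of_int x*real_of_int y]"
    unfolding P_def by (rule cross_val)
  have nz: "(vector [8*real_of_int x*real_of_int y, 8*real_of_int x*real_of_int y, -12*real_of_int x*real_of_int y] :: real^3) \<noteq> 0"
  proof
    assume "(vector [8*real_of_int x*real_of_int y, 8*real_of_int x*real_of_int y, -12*real_of_int x*real_of_int y] :: real^3) = 0"
    then have "(vector [8*real_of_int x*real_of_int y, 8*real_of_int x*real_of_int y, -12*real_of_int x*real_of_int y] :: real^3) $ 1 = 0" by simp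
    then show False using xp yp by simp
  qed
  have "\<not> collinear {matA *v P, matB *v P, matC *v P}"
  proof
    assume "collinear {matA *v P, matB *v P, matC *v P}"
    then have "collinear {matB *v P, matA *v P, matC *v P}" by (simp add: insert_commute)
    then have "collinear {0, matB *v P - matA *v P, matC *v P - matA *v P}"
      by (subst (asm) collinear_3) auto
    then show False using cr nz cross_eq_0 by metis
  qed
  moreover have "norm (vector [8*real_of_int x*real_of_int y, 8*real_of_int x*real_of_int y, -12*real_of_int x*real_of_int y] :: real^3) = 4 * real_of_int x * real_of_int y * sqrt 17"
  proof -
    have "norm (vector [8*real_of_int x*real_of_int y, 8*real_of_int x*real_of_int y, -12*real_of_int x*real_of_int y] :: real^3) = sqrt ((4*real_of_int x*real_of_int y)^2 * 17)"
      by (simp add: norm_eq_sqrt_inner inner_vec_def sum_3 algebra_simps power2_eq_square)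
    also have "\<dots> = 4 * real_of_int x * real_of_int y * sqrt 17"
      using xp yp by (simp add: real_sqrt_mult)
    finally show ?thesis .
  qed
  ultimately show ?thesis unfolding triangle_area_def cr by simp
qed

end
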